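(* Let $\mathcal{X}=\{v_1,\dots,v_N\}$ be the node set of a soft tree, i.e. a directed graph whose adjacency matrix $A\in[0,1]^{N\times N}$ is strictly upper triangular and satisfies $A^\top 1_N=(0,1,\dots,1)^\top$, with leaf set $\mathcal{X}_{\rm leaf}$, and let $w=(w_v)_{v\in\mathcal{X}}$ be positive weights. Then the relaxed Tree-Wasserstein distance $W^{\rm relax}_{d_\mathcal{X}}$ is a metric on the set of probability measures supported on $\mathcal{X}_{\rm leaf}$. Moreover, when $A\in\{0,1\}^{N\times N}$ (so that $\mathcal{X}$ is a directed rooted tree with root $v_1$), $W^{\rm relax}_{d_\mathcal{X}}(\mu,\nu)$ equals the Tree-Wasserstein distance, i.e. the 1-Wasserstein distance between $\mu$ and $\nu$ with respect to the tree metric $d_\mathcal{X}$ in which the edge whose deeper endpoint is $v$ has length $w_v$; equivalently $W^{\rm relax}_{d_\mathcal{X}}(\mu,\nu)=\sum_{v\in\mathcal{X}}w_v|\mu(\Gamma(v))-\nu(\Gamma(v))|$, where $\Gamma(v)$ is the set of nodes in the subtree rooted at $v$.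
   Context: As in the setting of SEAL, the nodes are ordered with latent (internal) labels first and observed labels last, $A=\begin{pmatrix}A_1&A_2\\0&0\end{pmatrix}$, and the observed labels form the leaf set $\mathcal{X}_{\rm leaf}$. Set $\alpha=(I-A)^{-1}=\sum_{k\ge0}A^k$ with entries $\alpha_{vx}$. For probability measures $\mu,\nu$ supported on $\mathcal{X}_{\rm leaf}$, the relaxed Tree-Wasserstein distance is $W^{\rm relax}_{d_\mathcal{X}}(\mu,\nu)=\sum_{v\in\mathcal{X}} w_v\left|\sum_{x\in\mathcal{X}_{\rm leaf}}\alpha_{vx}(\mu(x)-\nu(x))\right|$. The tree metric $d_\mathcal{X}(a,b)$ is the length (sum of edge weights) of the path between $a$ and $b$, and the 1-Wasserstein distance is $\min_{\pi\in\Pi(\mu,\nu)}\sum_{a,b} d_\mathcal{X}(a,b)\pi(a,b)$ over couplings $\pi$ of $\mu,\nu$. *)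

theory Defs
  imports Complex_Main
begin

text \<open>Nodes are 0,...,N-1 (node 0 is v_1, the root). Latent nodes are 0,...,M-1,
  observed labels (leaves) are M,...,N-1. Matrices are functions nat => nat => real,
  only entries with indices below N are relevant.\<close>

definition leaf_set :: "nat \<Rightarrow> nat \<Rightarrow> nat set" where
  "leaf_set N M = {M..<N}"

definition soft_tree :: "nat \<Rightarrow> nat \<Rightarrow> (nat \<Rightarrow> nat \<Rightarrow> real) \<Rightarrow> bool" where
  "soft_tree N M A \<longleftrightarrow>
     M \<le> N
   \<and> (\<forall>i<N. \<forall>j<N. 0 \<le> A i j \<and> A i j \<le> 1)
   \<and> (\<forall>i<N. \<forall>j<N. j \<le> i \<longrightarrow> A i j = 0)
   \<and> (\<Sum>i<N. A i 0) = 0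
   \<and> (\<forall>j. 1 \<le> j \<and> j < N \<longrightarrow> (\<Sum>i<N. A i j) = 1)
   \<and> (\<forall>i. M \<le> i \<and> i < N \<longrightarrow> (\<forall>j<N. A i j = 0))"

definition mat_mult :: "nat \<Rightarrow> (nat \<Rightarrow> nat \<Rightarrow> real) \<Rightarrow> (nat \<Rightarrow> nat \<Rightarrow> real) \<Rightarrow> nat \<Rightarrow> nat \<Rightarrow> real" where
  "mat_mult N A B i j = (\<Sum>k<N. A i k * B k j)"

fun mat_pow :: "nat \<Rightarrow> (nat \<Rightarrow> nat \<Rightarrow> real) \<Rightarrow> nat \<Rightarrow> nat \<Rightarrow> nat \<Rightarrow> real" where
  "mat_pow N A 0 = (\<lambda>i j. if i = j then 1 else 0)"
| "mat_pow N A (Suc k) = mat_mult N (mat_pow N A k) A"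

text \<open>alpha = (I - A)^{-1} = sum_{k >= 0} A^k\<close>
definition alpha :: "nat \<Rightarrow> (nat \<Rightarrow> nat \<Rightarrow> real) \<Rightarrow> nat \<Rightarrow> nat \<Rightarrow> real" where
  "alpha N A v x = (\<Sum>k. mat_pow N A k v x)"

definition W_relax :: "nat \<Rightarrow> nat \<Rightarrow> (nat \<Rightarrow> real) \<Rightarrow> (nat \<Rightarrow> nat \<Rightarrow> real)
    \<Rightarrow> (nat \<Rightarrow> real) \<Rightarrow> (nat \<Rightarrow> real) \<Rightarrow> real" where
  "W_relax N M w A \<mu> \<nu> =
     (\<Sum>v<N. w v * \<bar>\<Sum>x\<in>leaf_set N M. alpha N A v x * (\<mu> x - \<nu> x)\<bar>)"

definition leaf_probs :: "nat \<Rightarrow> nat \<Rightarrow> (nat \<Rightarrow> real) set" where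
  "leaf_probs N M = {\<mu>. (\<forall>x. 0 \<le> \<mu> x) \<and> (\<forall>x. x \<notin> leaf_set N M \<longrightarrow> \<mu> x = 0)
                        \<and> (\<Sum>x\<in>leaf_set N M. \<mu> x) = 1}"

definition metric_on :: "'a set \<Rightarrow> ('a \<Rightarrow> 'a \<Rightarrow> real) \<Rightarrow> bool" where
  "metric_on S d \<longleftrightarrow>
     (\<forall>x\<in>S. \<forall>y\<in>S. 0 \<le> d x y)
   \<and> (\<forall>x\<in>S. \<forall>y\<in>S. d x y = 0 \<longleftrightarrow> x = y)
   \<and> (\<forall>x\<in>S. \<forall>y\<in>S. d x y = d y x)
   \<and> (\<forall>x\<in>S. \<forall>y\<in>S. \<forall>z\<in>S. d x z \<le> d x y + d y z)"

text \<open>Tree case (A with 0/1 entries): edges (i,j) with A i j = 1; the edge whose deeper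
  endpoint is v has length w v.\<close>
definition tree_edges :: "nat \<Rightarrow> (nat \<Rightarrow> nat \<Rightarrow> real) \<Rightarrow> (nat \<times> nat) set" where
  "tree_edges N A = {(i, j). i < N \<and> j < N \<and> A i j = 1}"

definition edge_len :: "(nat \<Rightarrow> nat \<Rightarrow> real) \<Rightarrow> (nat \<Rightarrow> real) \<Rightarrow> nat \<Rightarrow> nat \<Rightarrow> real" where
  "edge_len A w u v = (if A u v = 1 then w v else w u)"

definition simple_path :: "nat \<Rightarrow> (nat \<Rightarrow> nat \<Rightarrow> real) \<Rightarrow> nat \<Rightarrow> nat \<Rightarrow> nat list \<Rightarrow> bool" where
  "simple_path N A a b ps \<longleftrightarrow>
     ps \<noteq> [] \<and> hd ps = a \<and> last ps = b \<and> distinct ps \<and> set ps \<subseteq> {..<N}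
   \<and> (\<forall>i. Suc i < length ps \<longrightarrow>
         (ps ! i, ps ! Suc i) \<in> tree_edges N A \<or> (ps ! Suc i, ps ! i) \<in> tree_edges N A)"

definition path_len :: "(nat \<Rightarrow> nat \<Rightarrow> real) \<Rightarrow> (nat \<Rightarrow> real) \<Rightarrow> nat list \<Rightarrow> real" where
  "path_len A w ps = (\<Sum>i<length ps - 1. edge_len A w (ps ! i) (ps ! Suc i))"

definition tree_dist :: "nat \<Rightarrow> (nat \<Rightarrow> nat \<Rightarrow> real) \<Rightarrow> (nat \<Rightarrow> real) \<Rightarrow> nat \<Rightarrow> nat \<Rightarrow> real" where
  "tree_dist N A w a b = Min {path_len A w ps | ps. simple_path N A a b ps}"

definition couplings :: "nat \<Rightarrow> (nat \<Rightarrow> real) \<Rightarrow> (nat \<Rightarrow> real) \<Rightarrow> (nat \<Rightarrow> nat \<Rightarrow> real) set" where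
  "couplings N \<mu> \<nu> = {\<pi>. (\<forall>a<N. \<forall>b<N. 0 \<le> \<pi> a b)
                        \<and> (\<forall>a<N. (\<Sum>b<N. \<pi> a b) = \<mu> a)
                        \<and> (\<forall>b<N. (\<Sum>a<N. \<pi> a b) = \<nu> b)}"

definition wasserstein1 :: "nat \<Rightarrow> (nat \<Rightarrow> nat \<Rightarrow> real) \<Rightarrow> (nat \<Rightarrow> real) \<Rightarrow> (nat \<Rightarrow> real) \<Rightarrow> real" where
  "wasserstein1 N d \<mu> \<nu> =
     Inf {(\<Sum>a<N. \<Sum>b<N. d a b * \<pi> a b) | \<pi>. \<pi> \<in> couplings N \<mu> \<nu>}"

definition subtree :: "nat \<Rightarrow> (nat \<Rightarrow> nat \<Rightarrow> real) \<Rightarrow> nat \<Rightarrow> nat set" where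
  "subtree N A v = {x. x < N \<and> (v, x) \<in> (tree_edges N A)\<^sup>*}"

end

theory Submission
  imports Defs
begin



locale st =
  fixes N M :: nat and A :: "nat \<Rightarrow> nat \<Rightarrow> real" and w :: "nat \<Rightarrow> real"
  assumes soft: "soft_tree N M A" and wpos: "\<forall>v<N. 0 < w v"
begin

lemma A_nonneg: "i < N \<Longrightarrow> j < N \<Longrightarrow> 0 \<le> A i j"
  using soft unfolding soft_tree_def by blast
lemma A_low: "i < N \<Longrightarrow> j < N \<Longrightarrow> j \<le> i \<Longrightarrow> A i j = 0"
  using soft unfolding soft_tree_def by blast
lemma A_leaf: "M \<le> i \<Longrightarrow> i < N \<Longrightarrow> j < N \<Longrightarrow> A i j = 0"
  using soft unfolding soft_tree_def by blast
lemma colsum: "1 \<le> j \<Longrightarrow> j < N \<Longrightarrow> (\<Sum>i<N. A i j) = 1"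
  using soft unfolding soft_tree_def by blast
lemma MN: "M \<le> N" using soft unfolding soft_tree_def by blast

lemma mat_pow_nz: "x < N \<Longrightarrow> mat_pow N A k v x \<noteq> 0 \<Longrightarrow> v + k \<le> x"
proof (induction k arbitrary: x)
  case 0
  then show ?case by (auto split: if_splits)
next
  case (Suc k)
  have "(\<Sum>j<N. mat_pow N A k v j * A j x) \<noteq> 0"
    using Suc.prems by (simp add: mat_mult_def)
  then obtain j where j: "j < N" "mat_pow N A k v j * A j x \<noteq> 0"
    by (meson sum.neutral lessThan_iff)
  then have "A j x \<noteq> 0" "mat_pow N A k v j \<noteq> 0" by auto
  then have "j < x" using A_low[of j x] j(1) Suc.prems(1) by (meson not_le)
  moreover have "v + k \<le> j" using Suc.IH[OF j(1)] \<open>mat_pow N A k v j \<noteq> 0\<close> by blast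
  ultimately show ?case by simp
qed

lemma alpha_fin: "x < N \<Longrightarrow> N \<le> K \<Longrightarrow> alpha N A v x = (\<Sum>k<K. mat_pow N A k v x)"
proof -
  assume x: "x < N" and K: "N \<le> K"
  have "mat_pow N A n v x = 0" if "n \<notin> {..<K}" for n
  proof (rule ccontr)
    assume "mat_pow N A n v x \<noteq> 0"
    then have "v + n \<le> x" using mat_pow_nz[OF x] by blast
    then show False using that x K by simp
  qed
  then show ?thesis unfolding alpha_def by (intro suminf_finite) auto
qed

lemma alpha_rec: "x < N \<Longrightarrow>
   alpha N A v x = (if v = x then 1 else 0) + (\<Sum>j<N. alpha N A v j * A j x)"
proof -
  assume x: "x < N"
  have "alpha N A v x = (\<Sum>k<Suc N. mat_pow N A k v x)" by (rule alpha_fin[OF x]) simp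
  also have "\<dots> = mat_pow N A 0 v x + (\<Sum>k<N. mat_pow N A (Suc k) v x)"
    by (rule sum.lessThan_Suc_shift)
  also have "(\<Sum>k<N. mat_pow N A (Suc k) v x) = (\<Sum>k<N. \<Sum>j<N. mat_pow N A k v j * A j x)"
    by (simp add: mat_mult_def)
  also have "\<dots> = (\<Sum>j<N. \<Sum>k<N. mat_pow N A k v j * A j x)" by (rule sum.swap)
  also have "\<dots> = (\<Sum>j<N. alpha N A v j * A j x)"
  proof (intro sum.cong refl)
    fix j assume "j \<in> {..<N}"
    then show "(\<Sum>k<N. mat_pow N A k v j * A j x) = alpha N A v j * A j x"
      using alpha_fin[of j N v] by (simp add: sum_distrib_right)
  qed
  finally show ?thesis by simp
qed

lemma alpha_leaf: "M \<le> v \<Longrightarrow> v < N \<Longrightarrow> x < N \<Longrightarrow> alpha N A v x = (if v = x then 1 else 0)"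
proof (induction x rule: less_induct)
  case (less x)
  have "(\<Sum>j<N. alpha N A v j * A j x) = (\<Sum>j<N. (if v = j then 1 else 0) * A j x)"
  proof (intro sum.cong refl)
    fix j assume j: "j \<in> {..<N}"
    show "alpha N A v j * A j x = (if v = j then 1 else 0) * A j x"
    proof (cases "j < x")
      case True then show ?thesis using less j by auto
    next
      case False then show ?thesis using A_low[of j x] j less.prems by auto
    qed
  qed
  also have "\<dots> = (\<Sum>j<N. if j = v then A j x else 0)" by (intro sum.cong) auto
  also have "\<dots> = A v x" using less.prems by simp
  also have "\<dots> = 0" using A_leaf less.prems by blast
  finally show ?case using alpha_rec[of x v] less.prems by simp
qed

definition S where "S \<mu> \<nu> v = (\<Sum>x\<in>leaf_set N M. alpha N A v x * (\<mu> x - \<nu> x))"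

lemma W_S: "W_relax N M w A \<mu> \<nu> = (\<Sum>v<N. w v * \<bar>S \<mu> \<nu> v\<bar>)"
  unfolding W_relax_def S_def by simp

lemma S_add: "S \<mu> \<rho> v = S \<mu> \<nu> v + S \<nu> \<rho> v"
  unfolding S_def sum.distrib[symmetric] by (intro sum.cong) (auto simp: algebra_simps)
lemma S_swap: "S \<nu> \<mu> v = - S \<mu> \<nu> v"
  unfolding S_def sum_negf[symmetric] by (intro sum.cong) (auto simp: algebra_simps)

lemma metric: "metric_on (leaf_probs N M) (W_relax N M w A)"
proof -
  have nn: "0 \<le> W_relax N M w A \<mu> \<nu>" for \<mu> \<nu>
    unfolding W_S using wpos by (intro sum_nonneg) (simp add: less_imp_le)
  have sym: "W_relax N M w A \<mu> \<nu> = W_relax N M w A \<nu> \<mu>" for \<mu> \<nu>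
    unfolding W_S by (intro sum.cong refl) (metis S_swap abs_minus_cancel)
  have tri: "W_relax N M w A \<mu> \<rho> \<le> W_relax N M w A \<mu> \<nu> + W_relax N M w A \<nu> \<rho>" for \<mu> \<nu> \<rho>
  proof -
    have "(\<Sum>v<N. w v * \<bar>S \<mu> \<rho> v\<bar>) \<le> (\<Sum>v<N. w v * \<bar>S \<mu> \<nu> v\<bar> + w v * \<bar>S \<nu> \<rho> v\<bar>)"
    proof (intro sum_mono)
      fix v assume "v \<in> {..<N}"
      then have "0 \<le> w v" using wpos by (simp add: less_imp_le)
      then have "w v * \<bar>S \<mu> \<rho> v\<bar> \<le> w v * (\<bar>S \<mu> \<nu> v\<bar> + \<bar>S \<nu> \<rho> v\<bar>)"
        unfolding S_add[of \<mu> \<rho> v \<nu>] by (intro mult_left_mono abs_triangle_ineq)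
      then show "w v * \<bar>S \<mu> \<rho> v\<bar> \<le> w v * \<bar>S \<mu> \<nu> v\<bar> + w v * \<bar>S \<nu> \<rho> v\<bar>"
        by (simp add: distrib_left)
    qed
    then show ?thesis unfolding W_S by (simp add: sum.distrib)
  qed
  have zero: "W_relax N M w A \<mu> \<nu> = 0 \<longleftrightarrow> \<mu> = \<nu>"
    if "\<mu> \<in> leaf_probs N M" "\<nu> \<in> leaf_probs N M" for \<mu> \<nu>
  proof
    assume "\<mu> = \<nu>" then show "W_relax N M w A \<mu> \<nu> = 0" unfolding W_S S_def by simp
  next
    assume W0: "W_relax N M w A \<mu> \<nu> = 0"
    have "\<forall>v\<in>{..<N}. w v * \<bar>S \<mu> \<nu> v\<bar> = 0"
      using W0 unfolding W_S
      by (subst sum_nonneg_eq_0_iff[symmetric]) (use wpos in \<open>auto simp: less_imp_le\<close>)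
    show "\<mu> = \<nu>"
    proof
      fix x
      show "\<mu> x = \<nu> x"
      proof (cases "x \<in> leaf_set N M")
        case True
        then have x: "M \<le> x" "x < N" by (auto simp: leaf_set_def)
        have "w x * \<bar>S \<mu> \<nu> x\<bar> = 0" using \<open>\<forall>v\<in>{..<N}. _\<close> x by blast
        moreover have "w x > 0" using x wpos by blast
        ultimately have "S \<mu> \<nu> x = 0" by simp
        moreover have "S \<mu> \<nu> x = (\<Sum>y\<in>leaf_set N M. if y = x then \<mu> y - \<nu> y else 0)"
          unfolding S_def by (intro sum.cong refl) (auto simp: leaf_set_def alpha_leaf x)
        moreover have "\<dots> = \<mu> x - \<nu> x" using True by (simp add: leaf_set_def)
        ultimately show ?thesis by simp
      next
        case False then show ?thesis using that by (simp add: leaf_probs_def)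
      qed
    qed
  qed
  show ?thesis unfolding metric_on_def using nn sym tri zero by blast
qed

end



locale tr = st +
  assumes bin: "\<forall>i<N. \<forall>j<N. A i j \<in> {0, 1}"
begin

abbreviation "E \<equiv> tree_edges N A"

definition par where "par x = (THE i. i < N \<and> A i x = 1)"

lemma par_ex1: assumes "1 \<le> x" "x < N" shows "\<exists>!i. i < N \<and> A i x = 1"
proof -
  have ex: "\<exists>i. i < N \<and> A i x = 1"
  proof (rule ccontr)
    assume "\<not> ?thesis"
    then have "\<forall>i\<in>{..<N}. A i x = 0" using bin assms by fastforce
    then have "(\<Sum>i<N. A i x) = 0" by simp
    then show False using colsum assms by simp
  qed
  moreover have "i = j" if "i < N" "A i x = 1" "j < N" "A j x = 1" for i j
  proof (rule ccontr)
    assume ne: "i \<noteq> j"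
    have "(\<Sum>i\<in>{i,j}. A i x) \<le> (\<Sum>i<N. A i x)"
      by (rule sum_mono2) (use that assms A_nonneg in auto)
    then show False using ne that colsum assms by simp
  qed
  ultimately show ?thesis by blast
qed

lemma par: assumes "1 \<le> x" "x < N"
  shows "par x < N" "A (par x) x = 1" "par x < x" "\<And>i. i < N \<Longrightarrow> A i x = (if i = par x then 1 else 0)"
proof -
  have *: "par x < N \<and> A (par x) x = 1" unfolding par_def by (rule theI') (rule par_ex1[OF assms])
  then show "par x < N" "A (par x) x = 1" by auto
  show "par x < x"
  proof (rule ccontr)
    assume "\<not> par x < x"
    then have "A (par x) x = 0" using * A_low[of "par x" x] assms by simp
    then show False using * by simp
  qed
  fix i assume i: "i < N"
  show "A i x = (if i = par x then 1 else 0)"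
  proof (cases "i = par x")
    case True then show ?thesis using * by simp
  next
    case False
    then have "A i x \<noteq> 1" using par_ex1[OF assms] * i by blast
    then show ?thesis using bin i assms False by auto
  qed
qed

lemma E_iff: "(i, x) \<in> E \<longleftrightarrow> i < N \<and> x < N \<and> 1 \<le> x \<and> i = par x"
proof
  assume "(i, x) \<in> E"
  then have h: "i < N" "x < N" "A i x = 1" by (auto simp: tree_edges_def)
  then have "x \<noteq> 0" using A_low[of i 0] by (metis zero_le zero_neq_one)
  then have "1 \<le> x" by simp
  then show "i < N \<and> x < N \<and> 1 \<le> x \<and> i = par x" using h par(4)[of x i] by (auto split: if_splits)
next
  assume "i < N \<and> x < N \<and> 1 \<le> x \<and> i = par x"
  then show "(i, x) \<in> E" using par by (auto simp: tree_edges_def)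
qed

lemma rt_le: "(i, j) \<in> E\<^sup>* \<Longrightarrow> i \<le> j"
proof (induction rule: rtrancl_induct)
  case base then show ?case by simp
next
  case (step y z) then show ?case using E_iff par(3)[of z] by fastforce
qed

lemma rt_step: assumes "1 \<le> x" "x < N" shows "(v, x) \<in> E\<^sup>* \<longleftrightarrow> v = x \<or> (v, par x) \<in> E\<^sup>*"
proof
  assume "(v, x) \<in> E\<^sup>*"
  then show "v = x \<or> (v, par x) \<in> E\<^sup>*"
  proof (cases rule: rtranclE)
    case base then show ?thesis by simp
  next
    case (step y) then show ?thesis using E_iff by auto
  qed
next
  have e: "(par x, x) \<in> E" using E_iff assms par(1) by auto
  assume "v = x \<or> (v, par x) \<in> E\<^sup>*"
  then show "(v, x) \<in> E\<^sup>*" using e by (meson rtrancl.rtrancl_refl rtrancl_into_rtrancl)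
qed

definition ind :: "nat \<Rightarrow> nat \<Rightarrow> real" where
  "ind v x = (if x < N \<and> (v, x) \<in> E\<^sup>* then 1 else 0)"

lemma ind_sub: "ind v x = (if x \<in> subtree N A v then 1 else 0)"
  unfolding ind_def subtree_def by simp

lemma ind_lt: "x < v \<Longrightarrow> ind v x = 0"
  unfolding ind_def using rt_le by fastforce

lemma ind_self: "v < N \<Longrightarrow> ind v v = 1"
  unfolding ind_def by simp

lemma ind_ge: "N \<le> x \<Longrightarrow> ind v x = 0"
  unfolding ind_def by simp

lemma ind_step: assumes "1 \<le> x" "x < N" shows "ind v x = (if v = x then 1 else ind v (par x))"
proof (cases "v = x")
  case True then show ?thesis using assms ind_self by simp
next
  case False
  then show ?thesis unfolding ind_def using rt_step[OF assms, of v] par(1)[OF assms] assms by simp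
qed

lemma ind_0: "0 < N \<Longrightarrow> ind v 0 = (if v = 0 then 1 else 0)"
  unfolding ind_def using rt_le by fastforce

lemma alpha_ind: "v < N \<Longrightarrow> x < N \<Longrightarrow> alpha N A v x = ind v x"
proof (induction x rule: less_induct)
  case (less x)
  show ?case
  proof (cases "x = 0")
    case True
    have "(\<Sum>j<N. alpha N A v j * A j x) = 0"
      using A_low True by (intro sum.neutral) auto
    then show ?thesis using alpha_rec[of x v] less.prems True ind_0 by simp
  next
    case False
    then have x: "1 \<le> x" "x < N" using less.prems by auto
    have "(\<Sum>j<N. alpha N A v j * A j x) = (\<Sum>j<N. if j = par x then alpha N A v j else 0)"
      using par(4)[OF x] by (intro sum.cong) auto
    also have "\<dots> = alpha N A v (par x)" using par(1)[OF x] by simp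
    also have "\<dots> = ind v (par x)" using less.IH[of "par x"] par[OF x] less.prems by simp
    finally show ?thesis using alpha_rec[of x v] x ind_step[OF x, of v] par[OF x] ind_lt[of "par x" x]
      by (auto split: if_splits)
  qed
qed

end



context tr begin

definition D where "D a b = (\<Sum>v<N. w v * \<bar>ind v a - ind v b\<bar>)"

lemma D_sym: "D a b = D b a"
  unfolding D_def by (simp add: abs_minus_commute)

lemma D_self: "D a a = 0"
  unfolding D_def by simp

lemma D_tri: "D a c \<le> D a b + D b c"
proof -
  have "D a c \<le> (\<Sum>v<N. w v * \<bar>ind v a - ind v b\<bar> + w v * \<bar>ind v b - ind v c\<bar>)"
    unfolding D_def
  proof (intro sum_mono)
    fix v assume "v \<in> {..<N}"
    then have "0 \<le> w v" using wpos by (simp add: less_imp_le)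
    have "\<bar>ind v a - ind v c\<bar> \<le> \<bar>ind v a - ind v b\<bar> + \<bar>ind v b - ind v c\<bar>" by simp
    from mult_left_mono[OF this \<open>0 \<le> w v\<close>]
    show "w v * \<bar>ind v a - ind v c\<bar> \<le> w v * \<bar>ind v a - ind v b\<bar> + w v * \<bar>ind v b - ind v c\<bar>"
      by (simp add: distrib_left)
  qed
  then show ?thesis unfolding D_def by (simp add: sum.distrib)
qed

lemma D_step: assumes "1 \<le> b" "b < N" "a < b" shows "D a b = D a (par b) + w b"
proof -
  have "D a b = (\<Sum>v<N. w v * \<bar>ind v a - ind v (par b)\<bar> + (if v = b then w b else 0))"
    unfolding D_def
  proof (intro sum.cong refl)
    fix v assume v: "v \<in> {..<N}"
    show "w v * \<bar>ind v a - ind v b\<bar> = w v * \<bar>ind v a - ind v (par b)\<bar> + (if v = b then w b else 0)"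
    proof (cases "v = b")
      case True
      then show ?thesis using ind_lt[of a b] ind_lt[of "par b" b] par[OF assms(1,2)] ind_self assms by simp
    next
      case False
      then show ?thesis using ind_step[OF assms(1,2), of v] by simp
    qed
  qed
  also have "\<dots> = D a (par b) + w b" unfolding D_def using assms by (simp add: sum.distrib)
  finally show ?thesis .
qed

lemma D_edge: assumes "(a, c) \<in> E \<or> (c, a) \<in> E" shows "D a c = edge_len A w a c"
  using assms
proof
  assume "(a, c) \<in> E"
  then have h: "a < N" "c < N" "1 \<le> c" "a = par c" using E_iff by auto
  then have "A a c = 1" using par by simp
  then show ?thesis using D_step[of c a] h par[of c] D_self by (simp add: edge_len_def)
next
  assume "(c, a) \<in> E"
  then have h: "c < N" "a < N" "1 \<le> a" "c = par a" using E_iff by auto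
  then have "A a c = 0" using par[of a] A_low by simp
  then show ?thesis using D_step[of a c] h par[of a] D_self D_sym by (simp add: edge_len_def)
qed

lemma path_len_single: "path_len A w [x] = 0"
  unfolding path_len_def by simp

lemma path_len_cons: "path_len A w (x # y # r) = edge_len A w x y + path_len A w (y # r)"
  unfolding path_len_def by (simp add: sum.lessThan_Suc_shift del: sum.lessThan_Suc)

lemma path_len_snoc: assumes "ps \<noteq> []"
  shows "path_len A w (ps @ [y]) = path_len A w ps + edge_len A w (last ps) y"
proof -
  obtain k where k: "length ps = Suc k" using assms by (cases ps) auto
  have "path_len A w (ps @ [y]) = (\<Sum>i<Suc k. edge_len A w ((ps @ [y]) ! i) ((ps @ [y]) ! Suc i))"
    unfolding path_len_def using k by simp
  also have "\<dots> = (\<Sum>i<k. edge_len A w ((ps @ [y]) ! i) ((ps @ [y]) ! Suc i))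
      + edge_len A w ((ps @ [y]) ! k) ((ps @ [y]) ! Suc k)" by simp
  also have "(\<Sum>i<k. edge_len A w ((ps @ [y]) ! i) ((ps @ [y]) ! Suc i)) = path_len A w ps"
    unfolding path_len_def using k by (intro sum.cong) (auto simp: nth_append)
  also have "(ps @ [y]) ! k = last ps" using k assms by (simp add: nth_append last_conv_nth)
  also have "(ps @ [y]) ! Suc k = y" using k by (simp add: nth_append)
  finally show ?thesis .
qed

definition adj where "adj ps \<longleftrightarrow> (\<forall>i. Suc i < length ps \<longrightarrow>
         (ps ! i, ps ! Suc i) \<in> E \<or> (ps ! Suc i, ps ! i) \<in> E)"

lemma simple_path_adj: "simple_path N A a b ps \<longleftrightarrow>
   ps \<noteq> [] \<and> hd ps = a \<and> last ps = b \<and> distinct ps \<and> set ps \<subseteq> {..<N} \<and> adj ps"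
  unfolding simple_path_def adj_def by simp

lemma lower: "ps \<noteq> [] \<Longrightarrow> adj ps \<Longrightarrow> D (hd ps) (last ps) \<le> path_len A w ps"
proof (induction ps)
  case Nil then show ?case by simp
next
  case (Cons x r)
  show ?case
  proof (cases r)
    case Nil then show ?thesis using D_self path_len_single by simp
  next
    case (Cons y r')
    have adjr: "adj r" using Cons.prems(2) unfolding adj_def by (auto simp: \<open>r = y # r'\<close>)
    have "(x, y) \<in> E \<or> (y, x) \<in> E" using Cons.prems(2) unfolding adj_def \<open>r = y # r'\<close>
      by (metis Suc_less_eq length_Cons nth_Cons_0 nth_Cons_Suc zero_less_Suc)
    then have e: "D x y = edge_len A w x y" by (rule D_edge)
    have "D x (last r) \<le> D x y + D y (last r)" by (rule D_tri)
    also have "\<dots> \<le> edge_len A w x y + path_len A w r"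
      using Cons.IH[OF _ adjr] e \<open>r = y # r'\<close> by simp
    finally show ?thesis using \<open>r = y # r'\<close> path_len_cons by simp
  qed
qed

lemma upper_aux: "\<forall>a b. a + b = s \<longrightarrow> a < N \<longrightarrow> b < N \<longrightarrow>
   (\<exists>ps. simple_path N A a b ps \<and> path_len A w ps = D a b \<and> set ps \<subseteq> {..max a b})"
proof (induction s rule: less_induct)
  case (less s)
  show ?case
  proof (intro allI impI)
    fix a b assume s: "a + b = s" and ab: "a < N" "b < N"
    consider "a = b" | "a < b" | "b < a" by linarith
    then show "\<exists>ps. simple_path N A a b ps \<and> path_len A w ps = D a b \<and> set ps \<subseteq> {..max a b}"
    proof cases
      case 1
      then show ?thesis using ab by (intro exI[of _ "[a]"]) (simp add: simple_path_def path_len_single D_self)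
    next
      case 2
      then have b1: "1 \<le> b" by simp
      note pb = par[OF b1 ab(2)]
      have "a + par b < s" using s pb(3) by simp
      from less.IH[OF this] pb(1) ab
      obtain ps where ps: "simple_path N A a (par b) ps" "path_len A w ps = D a (par b)"
        "set ps \<subseteq> {..max a (par b)}" by blast
      have ne: "ps \<noteq> []" "last ps = par b" using ps(1) by (auto simp: simple_path_def)
      have e: "(par b, b) \<in> E" using E_iff pb b1 ab by auto
      have nb: "b \<notin> set ps" using ps(3) 2 pb by auto
      have "simple_path N A a b (ps @ [b])"
        unfolding simple_path_adj
      proof (intro conjI)
        show "adj (ps @ [b])" unfolding adj_def
        proof (intro allI impI)
          fix i assume i: "Suc i < length (ps @ [b])"
          show "((ps @ [b]) ! i, (ps @ [b]) ! Suc i) \<in> E \<or> ((ps @ [b]) ! Suc i, (ps @ [b]) ! i) \<in> E"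
          proof (cases "Suc i < length ps")
            case True
            then show ?thesis using ps(1) unfolding simple_path_adj adj_def by (simp add: nth_append)
          next
            case False
            then have "Suc i = length ps" using i by simp
            then have "i = length ps - 1" by simp
            then have "(ps @ [b]) ! i = last ps" "(ps @ [b]) ! Suc i = b" using ne \<open>Suc i = length ps\<close>
              by (auto simp: nth_append last_conv_nth)
            then show ?thesis using e ne by simp
          qed
        qed
      qed (use ps(1) nb ab in \<open>auto simp: simple_path_def\<close>)
      moreover have "path_len A w (ps @ [b]) = D a b"
        using path_len_snoc[OF ne(1)] ne ps(2) D_step[OF b1 ab(2) 2] pb by (simp add: edge_len_def)
      moreover have "set (ps @ [b]) \<subseteq> {..max a b}" using ps(3) 2 pb by auto
      ultimately show ?thesis by blast
    next
      case 3
      then have a1: "1 \<le> a" by simp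
      note pa = par[OF a1 ab(1)]
      have "par a + b < s" using s pa(3) by simp
      from less.IH[OF this] pa(1) ab
      obtain ps where ps: "simple_path N A (par a) b ps" "path_len A w ps = D (par a) b"
        "set ps \<subseteq> {..max (par a) b}" by blast
      have ne: "ps \<noteq> []" "hd ps = par a" using ps(1) by (auto simp: simple_path_def)
      then have pse: "ps = par a # tl ps" by (cases ps) auto
      have e: "(par a, a) \<in> E" using E_iff pa a1 ab by auto
      have na: "a \<notin> set ps" using ps(3) 3 pa by auto
      have "simple_path N A a b (a # ps)"
        unfolding simple_path_adj
      proof (intro conjI)
        show "adj (a # ps)" unfolding adj_def
        proof (intro allI impI)
          fix i assume i: "Suc i < length (a # ps)"
          show "((a # ps) ! i, (a # ps) ! Suc i) \<in> E \<or> ((a # ps) ! Suc i, (a # ps) ! i) \<in> E"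
          proof (cases i)
            case 0
            then show ?thesis using e ne by (simp add: hd_conv_nth)
          next
            case (Suc j)
            then show ?thesis using ps(1) i unfolding simple_path_adj adj_def by simp
          qed
        qed
      qed (use ps(1) na ab in \<open>auto simp: simple_path_def\<close>)
      moreover have "path_len A w (a # ps) = D a b"
      proof -
        have "A a (par a) = 0" using A_low pa ab by simp
        then have "path_len A w (a # ps) = w a + path_len A w ps"
          using path_len_cons[of a "par a" "tl ps"] pse by (simp add: edge_len_def)
        then show ?thesis using ps(2) D_step[OF a1 ab(1), of b] 3 D_sym by simp
      qed
      moreover have "set (a # ps) \<subseteq> {..max a b}" using ps(3) 3 pa by auto
      ultimately show ?thesis by blast
    qed
  qed
qed

lemma tree_dist_D: assumes "a < N" "b < N" shows "tree_dist N A w a b = D a b"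
proof -
  let ?S = "{path_len A w ps | ps. simple_path N A a b ps}"
  have "?S \<subseteq> path_len A w ` {ps. set ps \<subseteq> {..<N} \<and> length ps \<le> N}"
  proof
    fix l assume "l \<in> ?S"
    then obtain ps where ps: "simple_path N A a b ps" "l = path_len A w ps" by blast
    then have "set ps \<subseteq> {..<N}" "distinct ps" by (auto simp: simple_path_def)
    then have "length ps \<le> N" using distinct_card[of ps] card_mono[of "{..<N}" "set ps"] by simp
    then show "l \<in> path_len A w ` {ps. set ps \<subseteq> {..<N} \<and> length ps \<le> N}"
      using ps \<open>set ps \<subseteq> {..<N}\<close> by blast
  qed
  then have fin: "finite ?S" using finite_lists_length_le[of "{..<N}" N]
    by (meson finite_imageI finite_lessThan finite_subset)
  obtain ps where ps: "simple_path N A a b ps" "path_len A w ps = D a b"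
    using upper_aux assms by blast
  have "Min ?S = D a b"
  proof (rule Min_eqI[OF fin])
    fix y assume "y \<in> ?S"
    then obtain qs where "simple_path N A a b qs" "y = path_len A w qs" by blast
    then show "D a b \<le> y" using lower[of qs] unfolding simple_path_adj by auto
  next
    show "D a b \<in> ?S" using ps by force
  qed
  then show ?thesis unfolding tree_dist_def .
qed

end



context tr begin

definition F where "F n \<mu> \<nu> = (\<Sum>v<N. w v * \<bar>\<Sum>x<n. ind v x * (\<mu> x - \<nu> x)\<bar>)"

definition good where "good n \<mu> \<nu> \<pi> \<longleftrightarrow> (\<forall>a<n. \<forall>b<n. 0 \<le> \<pi> a b)
   \<and> (\<forall>a<n. (\<Sum>b<n. \<pi> a b) = \<mu> a) \<and> (\<forall>b<n. (\<Sum>a<n. \<pi> a b) = \<nu> b)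
   \<and> (\<Sum>a<n. \<Sum>b<n. D a b * \<pi> a b) = F n \<mu> \<nu>"

lemma F_sym: "F n \<nu> \<mu> = F n \<mu> \<nu>"
proof -
  have "\<bar>\<Sum>x<n. ind v x * (\<nu> x - \<mu> x)\<bar> = \<bar>\<Sum>x<n. ind v x * (\<mu> x - \<nu> x)\<bar>" for v
  proof -
    have "(\<Sum>x<n. ind v x * (\<nu> x - \<mu> x)) = - (\<Sum>x<n. ind v x * (\<mu> x - \<nu> x))"
      unfolding sum_negf[symmetric] by (intro sum.cong) (auto simp: algebra_simps)
    then show ?thesis by simp
  qed
  then show ?thesis unfolding F_def by simp
qed

lemma good_transp: "good n \<mu> \<nu> \<pi> \<Longrightarrow> good n \<nu> \<mu> (\<lambda>a b. \<pi> b a)"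
proof -
  assume g: "good n \<mu> \<nu> \<pi>"
  have "(\<Sum>a<n. \<Sum>b<n. D a b * \<pi> b a) = (\<Sum>b<n. \<Sum>a<n. D b a * \<pi> b a)"
    by (subst sum.swap) (simp add: D_sym)
  then show ?thesis using g unfolding good_def by (simp add: F_sym)
qed

lemma sum_upd: fixes f \<mu> :: "nat \<Rightarrow> real" shows "p < n \<Longrightarrow> (\<Sum>x<n. f x * (\<mu>(p := \<mu> p + e)) x) = (\<Sum>x<n. f x * \<mu> x) + f p * e"
proof -
  assume p: "p < n"
  have "(\<Sum>x<n. f x * (\<mu>(p := \<mu> p + e)) x) = (\<Sum>x<n. f x * \<mu> x + (if x = p then f p * e else 0))"
    by (intro sum.cong) (auto simp: distrib_left)
  also have "\<dots> = (\<Sum>x<n. f x * \<mu> x) + f p * e" using p by (simp add: sum.distrib distrib_left)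
  finally show ?thesis .
qed

lemma step:
  assumes IH: "\<And>\<mu> \<nu>. (\<forall>x<n. 0 \<le> \<mu> x) \<Longrightarrow> (\<forall>x<n. 0 \<le> \<nu> x) \<Longrightarrow> (\<Sum>x<n. \<mu> x) = (\<Sum>x<n. \<nu> x)
      \<Longrightarrow> \<exists>\<pi>. good n \<mu> \<nu> \<pi>"
    and n: "n < N" and mu: "\<forall>x<Suc n. 0 \<le> \<mu> x" and nu: "\<forall>x<Suc n. 0 \<le> \<nu> x"
    and mass: "(\<Sum>x<Suc n. \<mu> x) = (\<Sum>x<Suc n. \<nu> x)" and le: "\<nu> n \<le> \<mu> n"
  shows "\<exists>\<pi>. good (Suc n) \<mu> \<nu> \<pi>"
proof (cases "n = 0")
  case True
  then have m: "\<mu> 0 = \<nu> 0" using mass by simp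
  show ?thesis
    by (rule exI[of _ "\<lambda>a b. if a = 0 \<and> b = 0 then \<mu> 0 else 0"])
       (use True m mu in \<open>simp add: good_def F_def D_self\<close>)
next
  case False
  then have n1: "1 \<le> n" by simp
  define p where "p = par n"
  have pn: "p < N" "A p n = 1" "p < n" using par[OF n1 n] unfolding p_def by auto
  define e where "e = \<mu> n - \<nu> n"
  have e0: "0 \<le> e" using le unfolding e_def by simp
  define \<mu>' where "\<mu>' = \<mu>(p := \<mu> p + e)"
  have mu': "\<forall>x<n. 0 \<le> \<mu>' x" using mu e0 pn unfolding \<mu>'_def by auto
  have nu': "\<forall>x<n. 0 \<le> \<nu> x" using nu by auto
  have "(\<Sum>x<n. \<mu>' x) = (\<Sum>x<n. \<mu> x) + e"
    using sum_upd[OF pn(3), of "\<lambda>_. 1" \<mu> e] unfolding \<mu>'_def by simp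
  also have "\<dots> = (\<Sum>x<n. \<nu> x)" using mass unfolding e_def by simp
  finally obtain \<pi>' where g: "good n \<mu>' \<nu> \<pi>'" using IH[OF mu' nu'] by blast
  have pi'nn: "\<And>a b. a < n \<Longrightarrow> b < n \<Longrightarrow> 0 \<le> \<pi>' a b"
    and rows: "\<And>a. a < n \<Longrightarrow> (\<Sum>b<n. \<pi>' a b) = \<mu>' a"
    and cols: "\<And>b. b < n \<Longrightarrow> (\<Sum>a<n. \<pi>' a b) = \<nu> b"
    and cost: "(\<Sum>a<n. \<Sum>b<n. D a b * \<pi>' a b) = F n \<mu>' \<nu>" using g unfolding good_def by auto
  have mup: "\<mu>' p = \<mu> p + e" unfolding \<mu>'_def by simp
  define q where "q b = \<pi>' p b * e / \<mu>' p" for b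
  have qsum: "(\<Sum>b<n. q b) = e"
  proof (cases "\<mu>' p = 0")
    case True
    have "0 \<le> \<mu> p" using mu pn(3) by simp
    then have "e = 0" using mup e0 True by linarith
    then show ?thesis unfolding q_def by simp
  next
    case False
    have "(\<Sum>b<n. q b) = (\<Sum>b<n. \<pi>' p b) * e / \<mu>' p"
      unfolding q_def by (simp add: sum_divide_distrib[symmetric] sum_distrib_right)
    then show ?thesis using rows[OF pn(3)] False by simp
  qed
  have qnn: "\<And>b. b < n \<Longrightarrow> 0 \<le> q b" unfolding q_def using pi'nn pn e0 mu' by simp
  have qle: "\<And>b. b < n \<Longrightarrow> q b \<le> \<pi>' p b"
  proof -
    fix b assume b: "b < n"
    show "q b \<le> \<pi>' p b"
    proof (cases "\<mu>' p = 0")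
      case True then show ?thesis unfolding q_def using pi'nn[OF pn(3) b] by simp
    next
      case False
      then have pos: "0 < \<mu>' p" using mu' pn by (metis less_eq_real_def)
      have "e / \<mu>' p \<le> 1" using pos mup mu pn by simp
      then have "\<pi>' p b * (e / \<mu>' p) \<le> \<pi>' p b * 1"
        by (intro mult_left_mono) (use pi'nn[OF pn(3) b] in auto)
      then show ?thesis unfolding q_def by simp
    qed
  qed
  define \<pi> where "\<pi> a b = (if a < n \<and> b < n then \<pi>' a b - (if a = p then q b else 0)
      else if a = n \<and> b < n then q b else if a = n \<and> b = n then \<nu> n else 0)" for a b
  have sumq: "(\<Sum>b<n. if a = p then q b else 0) = (if a = p then e else 0)" for a
    using qsum by simp
  have good_nn: "\<forall>a<Suc n. \<forall>b<Suc n. 0 \<le> \<pi> a b"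
    unfolding \<pi>_def using pi'nn qle qnn nu by (auto simp: less_Suc_eq)
  have good_rows: "\<forall>a<Suc n. (\<Sum>b<Suc n. \<pi> a b) = \<mu> a"
  proof (intro allI impI)
    fix a assume a: "a < Suc n"
    show "(\<Sum>b<Suc n. \<pi> a b) = \<mu> a"
    proof (cases "a < n")
      case True
      have "(\<Sum>b<Suc n. \<pi> a b) = (\<Sum>b<n. \<pi>' a b - (if a = p then q b else 0))"
        unfolding \<pi>_def using True by simp
      also have "\<dots> = \<mu>' a - (if a = p then e else 0)"
        by (simp only: sum_subtractf rows[OF True] sumq)
      also have "\<dots> = \<mu> a" unfolding \<mu>'_def by simp
      finally show ?thesis .
    next
      case False
      then have "a = n" using a by simp
      then have "(\<Sum>b<Suc n. \<pi> a b) = (\<Sum>b<n. q b) + \<nu> n" unfolding \<pi>_def by simp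
      then show ?thesis using qsum \<open>a = n\<close> unfolding e_def by simp
    qed
  qed
  have good_cols: "\<forall>b<Suc n. (\<Sum>a<Suc n. \<pi> a b) = \<nu> b"
  proof (intro allI impI)
    fix b assume b: "b < Suc n"
    show "(\<Sum>a<Suc n. \<pi> a b) = \<nu> b"
    proof (cases "b < n")
      case True
      have "(\<Sum>a<Suc n. \<pi> a b) = (\<Sum>a<n. \<pi>' a b - (if a = p then q b else 0)) + q b"
        unfolding \<pi>_def using True by simp
      also have "\<dots> = \<nu> b - q b + q b"
        using pn(3) by (simp only: sum_subtractf cols[OF True]) simp
      finally show ?thesis by simp
    next
      case False
      then have "b = n" using b by simp
      then show ?thesis unfolding \<pi>_def by simp
    qed
  qed
  have c1: "(\<Sum>b<Suc n. D a b * \<pi> a b) = (\<Sum>b<n. D a b * \<pi>' a b) - (if a = p then (\<Sum>b<n. D p b * q b) else 0)"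
    if a: "a < n" for a
  proof -
    have "(\<Sum>b<Suc n. D a b * \<pi> a b) = (\<Sum>b<n. D a b * \<pi> a b)" unfolding \<pi>_def using a by simp
    also have "\<dots> = (\<Sum>b<n. D a b * \<pi>' a b - (if a = p then D p b * q b else 0))"
      unfolding \<pi>_def using a by (intro sum.cong) (auto simp: algebra_simps)
    also have "\<dots> = (\<Sum>b<n. D a b * \<pi>' a b) - (if a = p then (\<Sum>b<n. D p b * q b) else 0)"
      by (simp add: sum_subtractf)
    finally show ?thesis .
  qed
  have c2: "(\<Sum>b<Suc n. D n b * \<pi> n b) = (\<Sum>b<n. D p b * q b) + w n * e"
  proof -
    have "(\<Sum>b<Suc n. D n b * \<pi> n b) = (\<Sum>b<n. D n b * q b)"
      unfolding \<pi>_def by (simp add: D_self)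
    also have "\<dots> = (\<Sum>b<n. D p b * q b + w n * q b)"
    proof (intro sum.cong refl)
      fix b assume "b \<in> {..<n}"
      then have "D n b = D p b + w n" using D_step[OF n1 n, of b] D_sym p_def by simp
      then show "D n b * q b = D p b * q b + w n * q b" by (simp add: algebra_simps)
    qed
    also have "\<dots> = (\<Sum>b<n. D p b * q b) + w n * e"
      by (simp add: sum.distrib sum_distrib_left[symmetric] qsum)
    finally show ?thesis .
  qed
  have costeq: "(\<Sum>a<Suc n. \<Sum>b<Suc n. D a b * \<pi> a b) = F n \<mu>' \<nu> + w n * e"
  proof -
    have "(\<Sum>a<Suc n. \<Sum>b<Suc n. D a b * \<pi> a b)
        = (\<Sum>a<n. \<Sum>b<Suc n. D a b * \<pi> a b) + (\<Sum>b<Suc n. D n b * \<pi> n b)"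
      by (rule sum.lessThan_Suc)
    also have "\<dots> = (\<Sum>a<n. (\<Sum>b<n. D a b * \<pi>' a b) - (if a = p then (\<Sum>b<n. D p b * q b) else 0))
          + ((\<Sum>b<n. D p b * q b) + w n * e)"
      unfolding c2 by (intro arg_cong2[where f="(+)"] sum.cong refl) (metis c1 lessThan_iff)
    also have "\<dots> = (\<Sum>a<n. \<Sum>b<n. D a b * \<pi>' a b) + w n * e"
      using pn(3) by (simp add: sum_subtractf)
    finally show ?thesis using cost by simp
  qed
  have Feq: "F (Suc n) \<mu> \<nu> = F n \<mu>' \<nu> + w n * e"
  proof -
    have "w v * \<bar>\<Sum>x<Suc n. ind v x * (\<mu> x - \<nu> x)\<bar>
        = w v * \<bar>\<Sum>x<n. ind v x * (\<mu>' x - \<nu> x)\<bar> + (if v = n then w n * e else 0)" for v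
    proof -
      have s1: "(\<Sum>x<Suc n. ind v x * (\<mu> x - \<nu> x)) = (\<Sum>x<n. ind v x * (\<mu> x - \<nu> x)) + ind v n * e"
        unfolding e_def by simp
      have "(\<Sum>x<n. ind v x * (\<mu>' x - \<nu> x)) = (\<Sum>x<n. ind v x * \<mu>' x) - (\<Sum>x<n. ind v x * \<nu> x)"
        by (simp add: right_diff_distrib sum_subtractf)
      also have "\<dots> = (\<Sum>x<n. ind v x * \<mu> x) + ind v p * e - (\<Sum>x<n. ind v x * \<nu> x)"
        unfolding \<mu>'_def using sum_upd[OF pn(3), of "ind v" \<mu> e] by simp
      also have "\<dots> = (\<Sum>x<n. ind v x * (\<mu> x - \<nu> x)) + ind v p * e"
        by (simp add: right_diff_distrib sum_subtractf)
      finally have s2: "(\<Sum>x<n. ind v x * (\<mu>' x - \<nu> x)) = (\<Sum>x<n. ind v x * (\<mu> x - \<nu> x)) + ind v p * e" .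
      show ?thesis
      proof (cases "v = n")
        case True
        have z: "(\<Sum>x<n. ind v x * (\<mu> x - \<nu> x)) = 0" using True ind_lt by simp
        show ?thesis using True s1 s2 z ind_self[OF n] ind_lt[OF pn(3)] e0 by simp
      next
        case False
        then have "ind v n = ind v p" using ind_step[OF n1 n, of v] p_def by simp
        then show ?thesis using s1 s2 False e_def by simp
      qed
    qed
    then have "F (Suc n) \<mu> \<nu> = (\<Sum>v<N. w v * \<bar>\<Sum>x<n. ind v x * (\<mu>' x - \<nu> x)\<bar> + (if v = n then w n * e else 0))"
      unfolding F_def by simp
    also have "\<dots> = F n \<mu>' \<nu> + w n * e" unfolding F_def using n by (simp add: sum.distrib)
    finally show ?thesis .
  qed
  have "good (Suc n) \<mu> \<nu> \<pi>" unfolding good_def using good_nn good_rows good_cols costeq Feq by simp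
  then show ?thesis by blast
qed

lemma exist: "n \<le> N \<Longrightarrow> (\<forall>x<n. 0 \<le> \<mu> x) \<Longrightarrow> (\<forall>x<n. 0 \<le> \<nu> x) \<Longrightarrow> (\<Sum>x<n. \<mu> x) = (\<Sum>x<n. \<nu> x)
   \<Longrightarrow> \<exists>\<pi>. good n \<mu> \<nu> \<pi>"
proof (induction n arbitrary: \<mu> \<nu>)
  case 0
  show ?case by (rule exI[of _ "\<lambda>a b. 0"]) (simp add: good_def F_def)
next
  case (Suc n)
  have IH: "\<And>\<mu> \<nu>. (\<forall>x<n. 0 \<le> \<mu> x) \<Longrightarrow> (\<forall>x<n. 0 \<le> \<nu> x) \<Longrightarrow> (\<Sum>x<n. \<mu> x) = (\<Sum>x<n. \<nu> x)
      \<Longrightarrow> \<exists>\<pi>. good n \<mu> \<nu> \<pi>" using Suc.IH Suc.prems(1) by simp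
  have n: "n < N" using Suc.prems(1) by simp
  show ?case
  proof (cases "\<nu> n \<le> \<mu> n")
    case True
    show ?thesis by (rule step[OF IH n Suc.prems(2,3,4) True])
  next
    case False
    obtain \<pi> where "good (Suc n) \<nu> \<mu> \<pi>"
      using step[OF IH n Suc.prems(3,2) Suc.prems(4)[symmetric]] False by fastforce
    then show ?thesis using good_transp by blast
  qed
qed

lemma lower_cost: assumes "\<pi> \<in> couplings N \<mu> \<nu>"
  shows "F N \<mu> \<nu> \<le> (\<Sum>a<N. \<Sum>b<N. D a b * \<pi> a b)"
proof -
  have nn: "\<And>a b. a < N \<Longrightarrow> b < N \<Longrightarrow> 0 \<le> \<pi> a b"
    and rows: "\<And>a. a < N \<Longrightarrow> (\<Sum>b<N. \<pi> a b) = \<mu> a"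
    and cols: "\<And>b. b < N \<Longrightarrow> (\<Sum>a<N. \<pi> a b) = \<nu> b" using assms unfolding couplings_def by auto
  have "(\<Sum>a<N. \<Sum>b<N. D a b * \<pi> a b) = (\<Sum>a<N. \<Sum>b<N. \<Sum>v<N. w v * (\<bar>ind v a - ind v b\<bar> * \<pi> a b))"
    unfolding D_def by (simp add: sum_distrib_right mult.assoc)
  also have "\<dots> = (\<Sum>a<N. \<Sum>v<N. \<Sum>b<N. w v * (\<bar>ind v a - ind v b\<bar> * \<pi> a b))"
  proof (rule sum.cong[OF refl])
    fix a show "(\<Sum>b<N. \<Sum>v<N. w v * (\<bar>ind v a - ind v b\<bar> * \<pi> a b)) = (\<Sum>v<N. \<Sum>b<N. w v * (\<bar>ind v a - ind v b\<bar> * \<pi> a b))"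
      by (rule sum.swap)
  qed
  also have "\<dots> = (\<Sum>v<N. \<Sum>a<N. \<Sum>b<N. w v * (\<bar>ind v a - ind v b\<bar> * \<pi> a b))"
    by (rule sum.swap)
  also have "\<dots> = (\<Sum>v<N. w v * (\<Sum>a<N. \<Sum>b<N. \<bar>(ind v a - ind v b) * \<pi> a b\<bar>))"
  proof (intro sum.cong refl)
    fix v assume "v \<in> {..<N}"
    have "(\<Sum>a<N. \<Sum>b<N. \<bar>(ind v a - ind v b) * \<pi> a b\<bar>) = (\<Sum>a<N. \<Sum>b<N. \<bar>ind v a - ind v b\<bar> * \<pi> a b)"
      using nn by (intro sum.cong refl) (simp add: abs_mult)
    then show "(\<Sum>a<N. \<Sum>b<N. w v * (\<bar>ind v a - ind v b\<bar> * \<pi> a b)) =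
        w v * (\<Sum>a<N. \<Sum>b<N. \<bar>(ind v a - ind v b) * \<pi> a b\<bar>)"
      by (simp add: sum_distrib_left)
  qed
  also have "\<dots> \<ge> F N \<mu> \<nu>" unfolding F_def
  proof (intro sum_mono)
    fix v assume v: "v \<in> {..<N}"
    have "(\<Sum>a<N. \<Sum>b<N. (ind v a - ind v b) * \<pi> a b)
        = (\<Sum>a<N. ind v a * (\<Sum>b<N. \<pi> a b)) - (\<Sum>b<N. ind v b * (\<Sum>a<N. \<pi> a b))"
    proof -
      have "(\<Sum>a<N. \<Sum>b<N. (ind v a - ind v b) * \<pi> a b)
          = (\<Sum>a<N. \<Sum>b<N. ind v a * \<pi> a b) - (\<Sum>a<N. \<Sum>b<N. ind v b * \<pi> a b)"
        by (simp add: left_diff_distrib sum_subtractf)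
      also have "(\<Sum>a<N. \<Sum>b<N. ind v b * \<pi> a b) = (\<Sum>b<N. \<Sum>a<N. ind v b * \<pi> a b)"
        by (rule sum.swap)
      finally show ?thesis by (simp add: sum_distrib_left)
    qed
    also have "\<dots> = (\<Sum>x<N. ind v x * (\<mu> x - \<nu> x))"
      by (simp add: rows cols right_diff_distrib sum_subtractf)
    finally have eq: "(\<Sum>x<N. ind v x * (\<mu> x - \<nu> x)) = (\<Sum>a<N. \<Sum>b<N. (ind v a - ind v b) * \<pi> a b)" by simp
    have "\<bar>\<Sum>x<N. ind v x * (\<mu> x - \<nu> x)\<bar> \<le> (\<Sum>a<N. \<bar>\<Sum>b<N. (ind v a - ind v b) * \<pi> a b\<bar>)"
      unfolding eq by (rule sum_abs)
    also have "\<dots> \<le> (\<Sum>a<N. \<Sum>b<N. \<bar>(ind v a - ind v b) * \<pi> a b\<bar>)"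
      by (intro sum_mono sum_abs)
    finally show "w v * \<bar>\<Sum>x<N. ind v x * (\<mu> x - \<nu> x)\<bar> \<le> w v * (\<Sum>a<N. \<Sum>b<N. \<bar>(ind v a - ind v b) * \<pi> a b\<bar>)"
      using wpos v by (intro mult_left_mono) auto
  qed
  finally show ?thesis .
qed

end



context tr begin

lemma sum_ind: "(\<Sum>x<N. ind v x * f x) = (\<Sum>x\<in>subtree N A v. f x)"
proof -
  have "subtree N A v = {..<N} \<inter> subtree N A v" by (auto simp: subtree_def)
  then have "(\<Sum>x\<in>subtree N A v. f x) = (\<Sum>x<N. if x \<in> subtree N A v then f x else 0)"
    by (metis (no_types) finite_lessThan sum.inter_restrict)
  moreover have "(\<Sum>x<N. ind v x * f x) = (\<Sum>x<N. if x \<in> subtree N A v then f x else 0)"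
    by (intro sum.cong) (auto simp: ind_sub)
  ultimately show ?thesis by simp
qed

lemma leaf_sum: assumes "\<mu> \<in> leaf_probs N M"
  shows "(\<Sum>x\<in>leaf_set N M. g x * \<mu> x) = (\<Sum>x<N. g x * \<mu> x)"
proof (rule sum.mono_neutral_left)
  show "leaf_set N M \<subseteq> {..<N}" by (auto simp: leaf_set_def)
  show "\<forall>i\<in>{..<N} - leaf_set N M. g i * \<mu> i = 0" using assms by (simp add: leaf_probs_def)
qed simp

lemma main_tree: assumes mu: "\<mu> \<in> leaf_probs N M" and nu: "\<nu> \<in> leaf_probs N M"
  shows "W_relax N M w A \<mu> \<nu> = wasserstein1 N (tree_dist N A w) \<mu> \<nu>
   \<and> W_relax N M w A \<mu> \<nu> =
               (\<Sum>v<N. w v * \<bar>(\<Sum>x\<in>subtree N A v. \<mu> x) - (\<Sum>x\<in>subtree N A v. \<nu> x)\<bar>)"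
proof -
  have inner: "(\<Sum>x\<in>leaf_set N M. alpha N A v x * (\<mu> x - \<nu> x)) = (\<Sum>x<N. ind v x * (\<mu> x - \<nu> x))"
    if v: "v < N" for v
  proof -
    have "(\<Sum>x\<in>leaf_set N M. alpha N A v x * (\<mu> x - \<nu> x)) = (\<Sum>x\<in>leaf_set N M. ind v x * (\<mu> x - \<nu> x))"
      using v alpha_ind by (intro sum.cong) (auto simp: leaf_set_def)
    also have "\<dots> = (\<Sum>x\<in>leaf_set N M. ind v x * \<mu> x) - (\<Sum>x\<in>leaf_set N M. ind v x * \<nu> x)"
      by (simp add: right_diff_distrib sum_subtractf)
    also have "\<dots> = (\<Sum>x<N. ind v x * \<mu> x) - (\<Sum>x<N. ind v x * \<nu> x)"
      using leaf_sum[OF mu] leaf_sum[OF nu] by simp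
    also have "\<dots> = (\<Sum>x<N. ind v x * (\<mu> x - \<nu> x))"
      by (simp add: right_diff_distrib sum_subtractf)
    finally show ?thesis .
  qed
  have WF: "W_relax N M w A \<mu> \<nu> = F N \<mu> \<nu>"
    unfolding W_relax_def F_def using inner by simp
  have sec: "F N \<mu> \<nu> = (\<Sum>v<N. w v * \<bar>(\<Sum>x\<in>subtree N A v. \<mu> x) - (\<Sum>x\<in>subtree N A v. \<nu> x)\<bar>)"
    unfolding F_def sum_ind[symmetric] by (simp add: right_diff_distrib sum_subtractf)
  have cost_eq: "(\<Sum>a<N. \<Sum>b<N. tree_dist N A w a b * \<pi> a b) = (\<Sum>a<N. \<Sum>b<N. D a b * \<pi> a b)" for \<pi>
    by (intro sum.cong refl) (simp add: tree_dist_D)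
  have m1: "(\<Sum>x<N. \<mu> x) = 1" using leaf_sum[OF mu, of "\<lambda>_. 1"] mu by (simp add: leaf_probs_def)
  have m2: "(\<Sum>x<N. \<nu> x) = 1" using leaf_sum[OF nu, of "\<lambda>_. 1"] nu by (simp add: leaf_probs_def)
  obtain \<pi> where g: "good N \<mu> \<nu> \<pi>"
    using exist[of N \<mu> \<nu>] mu nu m1 m2 by (auto simp: leaf_probs_def)
  then have pc: "\<pi> \<in> couplings N \<mu> \<nu>" "(\<Sum>a<N. \<Sum>b<N. D a b * \<pi> a b) = F N \<mu> \<nu>"
    unfolding good_def couplings_def by auto
  have "wasserstein1 N (tree_dist N A w) \<mu> \<nu> = F N \<mu> \<nu>"
    unfolding wasserstein1_def
  proof (rule cInf_eq_minimum)
    show "F N \<mu> \<nu> \<in> {\<Sum>a<N. \<Sum>b<N. tree_dist N A w a b * \<pi> a b |\<pi>. \<pi> \<in> couplings N \<mu> \<nu>}"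
      using pc cost_eq by (metis (mono_tags, lifting) mem_Collect_eq)
  next
    fix x assume "x \<in> {\<Sum>a<N. \<Sum>b<N. tree_dist N A w a b * \<pi> a b |\<pi>. \<pi> \<in> couplings N \<mu> \<nu>}"
    then obtain \<pi>' where "\<pi>' \<in> couplings N \<mu> \<nu>" "x = (\<Sum>a<N. \<Sum>b<N. tree_dist N A w a b * \<pi>' a b)"
      by blast
    then show "F N \<mu> \<nu> \<le> x" using lower_cost cost_eq by simp
  qed
  then show ?thesis using WF sec by simp
qed

end

theorem theorem4:
  fixes N M :: nat and A :: "nat \<Rightarrow> nat \<Rightarrow> real" and w :: "nat \<Rightarrow> real"
  assumes "soft_tree N M A"
    and "\<forall>v<N. 0 < w v"
  shows "metric_on (leaf_probs N M) (W_relax N M w A)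
       \<and> ((\<forall>i<N. \<forall>j<N. A i j \<in> {0, 1}) \<longrightarrow>
          (\<forall>\<mu>\<in>leaf_probs N M. \<forall>\<nu>\<in>leaf_probs N M.
             W_relax N M w A \<mu> \<nu> = wasserstein1 N (tree_dist N A w) \<mu> \<nu>
           \<and> W_relax N M w A \<mu> \<nu> =
               (\<Sum>v<N. w v * \<bar>(\<Sum>x\<in>subtree N A v. \<mu> x) - (\<Sum>x\<in>subtree N A v. \<nu> x)\<bar>)))"
proof -
  interpret st N M A w using assms by unfold_locales
  have "metric_on (leaf_probs N M) (W_relax N M w A)" by (rule metric)
  moreover have "(\<forall>\<mu>\<in>leaf_probs N M. \<forall>\<nu>\<in>leaf_probs N M.
             W_relax N M w A \<mu> \<nu> = wasserstein1 N (tree_dist N A w) \<mu> \<nu>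
           \<and> W_relax N M w A \<mu> \<nu> =
               (\<Sum>v<N. w v * \<bar>(\<Sum>x\<in>subtree N A v. \<mu> x) - (\<Sum>x\<in>subtree N A v. \<nu> x)\<bar>))"
    if bin: "\<forall>i<N. \<forall>j<N. A i j \<in> {0, 1}"
  proof -
    interpret tr N M A w using assms bin by unfold_locales
    show ?thesis using main_tree by blast
  qed
  ultimately show ?thesis by blast
qed


end
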